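(* Let $W=\langle s,t: s^2=t^2=(st)^m=1\rangle$ be a Coxeter group of rank $2$ with $S=\{s,t\}$, where $m\ge2$ is the order of $st$, and let $w_0$ be its longest element. Then $e_S=\operatorname{Av}(\langle w_0\rangle)-\operatorname{Av}(W)$.
   Context: For a subgroup $U$ of $W$, $\operatorname{Av}(U)=\frac1{|U|}\sum_{u\in U}u\in\mathbb CW$. Descent algebra data: for $J\subseteq S$, $X_J=\{w\in W:\ell(rw)>\ell(w)\ \forall r\in J\}$, $x_J=\sum_{x\in X_J}x^{-1}$, $X_J^\sharp=\{x\in X_J:x^{-1}Jx\subseteq S\}$; for $K,L\subseteq S$, $m_{KL}=|X_K\cap X_L^\sharp|$ if $L\subseteq K$ and $0$ otherwise; the matrix $(m_{KL})$ is invertible and the elements $e_L$ ($L\subseteq S$) are defined by $x_K=\sum_{L\subseteq S}m_{KL}e_L$ for all $K\subseteq S$. *)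

theory Defs
  imports Complex_Main
begin

text \<open>Concrete model of the rank 2 Coxeter group W = <s,t | s^2=t^2=(st)^m=1>
  (dihedral group of order 2m). The pair (k,b) with k < m encodes r^k s^b where r = st.\<close>

type_synonym dih = "nat \<times> bool"

definition dih_carrier :: "nat \<Rightarrow> dih set" where
  "dih_carrier m = {(k, b). k < m}"

definition dih_mult :: "nat \<Rightarrow> dih \<Rightarrow> dih \<Rightarrow> dih" where
  "dih_mult m x y = (case x of (a, e) \<Rightarrow> case y of (c, f) \<Rightarrow>
     ((a + (if e then m - c else c)) mod m, e \<noteq> f))"

definition dih_one :: dih where
  "dih_one = (0, False)"

definition dih_inv :: "nat \<Rightarrow> dih \<Rightarrow> dih" where
  "dih_inv m x = (case x of (a, e) \<Rightarrow> if e then (a, e) else ((m - a) mod m, False))"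

definition dih_pow :: "nat \<Rightarrow> dih \<Rightarrow> nat \<Rightarrow> dih" where
  "dih_pow m w k = (dih_mult m w ^^ k) dih_one"

text \<open>The Coxeter generators: s = (0,True), t = s r = (m-1,True), so that s t = r.\<close>
definition gen_s :: dih where "gen_s = (0, True)"
definition gen_t :: "nat \<Rightarrow> dih" where "gen_t m = (m - 1, True)"
definition dihS :: "nat \<Rightarrow> dih set" where "dihS m = {gen_s, gen_t m}"

definition prod_word :: "nat \<Rightarrow> dih list \<Rightarrow> dih" where
  "prod_word m ws = foldr (dih_mult m) ws dih_one"

definition len :: "nat \<Rightarrow> dih \<Rightarrow> nat" where
  "len m w = (LEAST n. \<exists>ws. set ws \<subseteq> dihS m \<and> length ws = n \<and> prod_word m ws = w)"

definition w0 :: "nat \<Rightarrow> dih" where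
  "w0 m = (THE w. w \<in> dih_carrier m \<and> (\<forall>v \<in> dih_carrier m. len m v \<le> len m w))"

definition cyc :: "nat \<Rightarrow> dih \<Rightarrow> dih set" where
  "cyc m w = {dih_pow m w k | k. True}"

text \<open>Group algebra CW: functions W \<Rightarrow> complex (coefficients).\<close>
definition delta :: "dih \<Rightarrow> dih \<Rightarrow> complex" where
  "delta w = (\<lambda>g. if g = w then 1 else 0)"

definition Av :: "dih set \<Rightarrow> dih \<Rightarrow> complex" where
  "Av U = (\<lambda>g. (1 / of_nat (card U)) * (\<Sum>u\<in>U. delta u g))"

definition XJ :: "nat \<Rightarrow> dih set \<Rightarrow> dih set" where
  "XJ m J = {w \<in> dih_carrier m. \<forall>r\<in>J. len m (dih_mult m r w) > len m w}"

definition xJ :: "nat \<Rightarrow> dih set \<Rightarrow> dih \<Rightarrow> complex" where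
  "xJ m J = (\<lambda>g. \<Sum>x\<in>XJ m J. delta (dih_inv m x) g)"

definition XJ_sharp :: "nat \<Rightarrow> dih set \<Rightarrow> dih set" where
  "XJ_sharp m J = {x \<in> XJ m J.
     (\<lambda>j. dih_mult m (dih_mult m (dih_inv m x) j) x) ` J \<subseteq> dihS m}"

definition mKL :: "nat \<Rightarrow> dih set \<Rightarrow> dih set \<Rightarrow> nat" where
  "mKL m K L = (if L \<subseteq> K then card (XJ m K \<inter> XJ_sharp m L) else 0)"

end

theory Submission
  imports Defs
begin

lemma mod2: "x < 2*m \<Longrightarrow> x mod (m::nat) = (if x < m then x else x - m)"
  by (metis le_mod_geq less_diff_conv2 mod_less mult_2 not_less)

lemma mult_eq: "a < m \<Longrightarrow> c < m \<Longrightarrow> dih_mult m (a,e) (c,f) =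
  ((if e then (if c = 0 then a else if c \<le> a then a - c else a + m - c)
    else (if a + c < m then a + c else a + c - m)), e \<noteq> f)"
  unfolding dih_mult_def by (auto simp: mod2)

lemma inv_eq: "a < m \<Longrightarrow> dih_inv m (a,e) = (if e then (a,e) else (if a = 0 then 0 else m - a, False))"
  unfolding dih_inv_def by auto

lemma s_mult: "k < m \<Longrightarrow> dih_mult m gen_s (k,b) = (if k = 0 then 0 else m - k, \<not> b)"
  unfolding gen_s_def by (subst mult_eq) auto

lemma t_mult: "k < m \<Longrightarrow> dih_mult m (gen_t m) (k,b) = (m - 1 - k, \<not> b)"
  unfolding gen_t_def by (subst mult_eq) auto

lemma mult_carrier: "0 < m \<Longrightarrow> dih_mult m x y \<in> dih_carrier m"
  unfolding dih_mult_def dih_carrier_def by (auto split: prod.splits)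

definition fl :: "nat \<Rightarrow> dih \<Rightarrow> nat" where
  "fl m w = (case w of (k,b) \<Rightarrow> if b then min (2*k+1) (2*(m-k)-1) else 2 * min k (m-k))"

definition dS :: "nat \<Rightarrow> dih \<Rightarrow> bool" where
  "dS m w = (case w of (k,b) \<Rightarrow> if b then 2*k < m else 0 < k \<and> 2*k \<le> m)"
definition dT :: "nat \<Rightarrow> dih \<Rightarrow> bool" where
  "dT m w = (case w of (k,b) \<Rightarrow> if b then m \<le> 2*k+1 else m \<le> 2*k)"

lemma fl_s: "k < m \<Longrightarrow> fl m (dih_mult m gen_s (k,b)) = (if dS m (k,b) then fl m (k,b) - 1 else fl m (k,b) + 1)"
  by (simp add: s_mult fl_def dS_def)

lemma fl_t: "k < m \<Longrightarrow> fl m (dih_mult m (gen_t m) (k,b)) = (if dT m (k,b) then fl m (k,b) - 1 else fl m (k,b) + 1)"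
  by (simp add: t_mult fl_def dT_def; arith)

lemma dS_pos: "k < m \<Longrightarrow> dS m (k,b) \<Longrightarrow> 0 < fl m (k,b)"
  by (auto simp: fl_def dS_def)
lemma dT_pos: "k < m \<Longrightarrow> dT m (k,b) \<Longrightarrow> 0 < fl m (k,b)"
  by (auto simp: fl_def dT_def)


lemma carrier_iff: "(k,b) \<in> dih_carrier m \<longleftrightarrow> k < m"
  by (simp add: dih_carrier_def)

lemma gens_carrier: "2 \<le> m \<Longrightarrow> r \<in> dihS m \<Longrightarrow> r \<in> dih_carrier m"
  by (auto simp: dihS_def gen_s_def gen_t_def dih_carrier_def)

lemma fl_step: "2 \<le> m \<Longrightarrow> r \<in> dihS m \<Longrightarrow> w \<in> dih_carrier m \<Longrightarrow> fl m (dih_mult m r w) \<le> fl m w + 1"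
  apply (cases w)
  apply (auto simp: dihS_def fl_s fl_t carrier_iff)
  done

lemma prod_word_fl: "2 \<le> m \<Longrightarrow> set ws \<subseteq> dihS m \<Longrightarrow>
   prod_word m ws \<in> dih_carrier m \<and> fl m (prod_word m ws) \<le> length ws"
proof (induction ws)
  case Nil then show ?case by (simp add: prod_word_def dih_one_def carrier_iff fl_def)
next
  case (Cons r ws)
  have pw: "prod_word m (r # ws) = dih_mult m r (prod_word m ws)" by (simp add: prod_word_def)
  from Cons have "prod_word m ws \<in> dih_carrier m" "fl m (prod_word m ws) \<le> length ws" "r \<in> dihS m" by auto
  then show ?case using Cons.prems fl_step[of m r "prod_word m ws"] mult_carrier[of m]
    by (simp add: pw)
qed

lemma s_invol: "k < m \<Longrightarrow> dih_mult m gen_s (dih_mult m gen_s (k,b)) = (k,b)"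
  by (simp add: s_mult)
lemma t_invol: "k < m \<Longrightarrow> dih_mult m (gen_t m) (dih_mult m (gen_t m) (k,b)) = (k,b)"
  by (simp add: t_mult)

lemma fl_zero: "k < m \<Longrightarrow> fl m (k,b) = 0 \<Longrightarrow> (k,b) = (0,False)"
  by (auto simp: fl_def split: if_splits)

lemma fl_desc: "2 \<le> m \<Longrightarrow> k < m \<Longrightarrow> 0 < fl m (k,b) \<Longrightarrow> dS m (k,b) \<or> dT m (k,b)"
  by (auto simp: fl_def dS_def dT_def split: if_splits)

lemma exists_word: "2 \<le> m \<Longrightarrow> w \<in> dih_carrier m \<Longrightarrow>
   \<exists>ws. set ws \<subseteq> dihS m \<and> length ws = fl m w \<and> prod_word m ws = w"
proof (induction "fl m w" arbitrary: w rule: less_induct)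
  case less
  obtain k b where w: "w = (k,b)" by (cases w)
  have km: "k < m" using less.prems w by (simp add: carrier_iff)
  show ?case
  proof (cases "fl m w = 0")
    case True
    then have "w = (0,False)" using fl_zero[OF km, of b] w by simp
    then show ?thesis using True by (intro exI[of _ "[]"]) (simp add: prod_word_def dih_one_def)
  next
    case False
    then have "dS m w \<or> dT m w" using fl_desc[OF less.prems(1) km] w by simp
    then obtain r where r: "r \<in> dihS m" "fl m (dih_mult m r w) + 1 = fl m w"
        "dih_mult m r (dih_mult m r w) = w"
    proof
      assume "dS m w"
      then show ?thesis using that[of gen_s] km w False fl_s[OF km, of b] s_invol[OF km, of b]
        by (auto simp: dihS_def)
    next
      assume "dT m w"
      then show ?thesis using that[of "gen_t m"] km w False fl_t[OF km, of b] t_invol[OF km, of b]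
        by (auto simp: dihS_def)
    qed
    have "dih_mult m r w \<in> dih_carrier m" using mult_carrier less.prems by simp
    then obtain ws where ws: "set ws \<subseteq> dihS m" "length ws = fl m (dih_mult m r w)"
        "prod_word m ws = dih_mult m r w"
      using less.hyps[of "dih_mult m r w"] r(2) less.prems by fastforce
    show ?thesis
      apply (rule exI[of _ "r # ws"])
      using ws r by (simp add: prod_word_def)
  qed
qed

lemma len_eq: "2 \<le> m \<Longrightarrow> w \<in> dih_carrier m \<Longrightarrow> len m w = fl m w"
  unfolding len_def
proof (rule Least_equality)
  assume "2 \<le> m" "w \<in> dih_carrier m"
  then show "\<exists>ws. set ws \<subseteq> dihS m \<and> length ws = fl m w \<and> prod_word m ws = w"
    by (rule exists_word)
next
  fix y assume "2 \<le> m" "\<exists>ws. set ws \<subseteq> dihS m \<and> length ws = y \<and> prod_word m ws = w"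
  then show "fl m w \<le> y" using prod_word_fl by blast
qed


lemma XJ_mem: "2 \<le> m \<Longrightarrow> J \<subseteq> dihS m \<Longrightarrow> (k,b) \<in> XJ m J \<longleftrightarrow> k < m \<and>
   (gen_s \<in> J \<longrightarrow> \<not> dS m (k,b)) \<and> (gen_t m \<in> J \<longrightarrow> \<not> dT m (k,b))"
proof -
  assume m: "2 \<le> m" and J: "J \<subseteq> dihS m"
  have c: "dih_mult m r (k,b) \<in> dih_carrier m" for r using mult_carrier m by simp
  show ?thesis
  proof (cases "k < m")
    case True
    have L: "len m (dih_mult m r (k,b)) > len m (k,b) \<longleftrightarrow>
       (if r = gen_s then \<not> dS m (k,b) else \<not> dT m (k,b))" if "r \<in> dihS m" for r
      using that True m len_eq[OF m c[of r]] len_eq[OF m, of "(k,b)"] fl_s[OF True, of b] fl_t[OF True, of b]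
      by (auto simp: dihS_def carrier_iff)
    have st: "gen_s \<noteq> gen_t m" using m by (simp add: gen_s_def gen_t_def)
    have sS: "gen_s \<in> dihS m" and tS: "gen_t m \<in> dihS m" by (auto simp: dihS_def)
    have Ls: "len m (dih_mult m gen_s (k,b)) > len m (k,b) \<longleftrightarrow> \<not> dS m (k,b)"
      using L[OF sS] by simp
    have Lt: "len m (dih_mult m (gen_t m) (k,b)) > len m (k,b) \<longleftrightarrow> \<not> dT m (k,b)"
      using L[OF tS] st by simp
    have JJ: "\<And>r. r \<in> J \<Longrightarrow> r = gen_s \<or> r = gen_t m" using J by (auto simp: dihS_def)
    have "(\<forall>r\<in>J. len m (dih_mult m r (k,b)) > len m (k,b)) \<longleftrightarrow>
       (gen_s \<in> J \<longrightarrow> \<not> dS m (k,b)) \<and> (gen_t m \<in> J \<longrightarrow> \<not> dT m (k,b))"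
      using JJ Ls Lt by metis
    then show ?thesis unfolding XJ_def using True
      by (simp add: carrier_iff)
  qed (simp add: XJ_def carrier_iff)
qed

definition w0' :: "nat \<Rightarrow> dih" where "w0' m = (m div 2, m mod 2 = 1)"

lemma XJ_S: "2 \<le> m \<Longrightarrow> XJ m (dihS m) = {(0,False)}"
  apply (auto simp: XJ_mem dihS_def)
  apply (auto simp: XJ_mem dihS_def dS_def dT_def split: if_splits)
  done

lemma st_neq: "2 \<le> m \<Longrightarrow> gen_s \<noteq> gen_t m"
  by (simp add: gen_s_def gen_t_def)

lemma sS: "{gen_s} \<subseteq> dihS m" and tS: "{gen_t m} \<subseteq> dihS m"
  by (auto simp: dihS_def)

lemma both_desc: "k < m \<Longrightarrow> (dS m (k,b) \<and> dT m (k,b)) \<longleftrightarrow> (k,b) = w0' m"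
  unfolding dS_def dT_def w0'_def by auto presburger+

lemma XJ_union: assumes m: "2 \<le> m" shows "XJ m {gen_s} \<union> XJ m {gen_t m} = dih_carrier m - {w0' m}"
proof (intro set_eqI)
  fix x :: dih
  obtain k b where x: "x = (k,b)" by (cases x)
  show "x \<in> XJ m {gen_s} \<union> XJ m {gen_t m} \<longleftrightarrow> x \<in> dih_carrier m - {w0' m}"
    unfolding x using XJ_mem[OF m sS, of k b] XJ_mem[OF m tS, of k b] st_neq[OF m] both_desc[of k m b]
    by (auto simp: carrier_iff)
qed


lemma conj_s: "2 \<le> m \<Longrightarrow> k < m \<Longrightarrow> dih_mult m (dih_mult m (dih_inv m (k,b)) gen_s) (k,b) =
  (if b then (if 2*k < m then 2*k else 2*k - m) else (if k = 0 then 0 else if 2*k \<le> m then m - 2*k else 2*m - 2*k), True)"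
  unfolding gen_s_def by (auto simp: inv_eq mult_eq)

lemma conj_t: "2 \<le> m \<Longrightarrow> k < m \<Longrightarrow> dih_mult m (dih_mult m (dih_inv m (k,b)) (gen_t m)) (k,b) =
  (if b then (if 2*k + 1 < m then 2*k+1 else 2*k+1 - m) else (if 2*k+1 \<le> m then m - 2*k - 1 else 2*m - 2*k - 1), True)"
  unfolding gen_t_def by (auto simp: inv_eq mult_eq)


definition zs :: "nat \<Rightarrow> dih" where
  "zs m = (if m mod 2 = 1 then ((m+1) div 2, False) else (m div 2, True))"
definition zt :: "nat \<Rightarrow> dih" where
  "zt m = (if m mod 2 = 1 then ((m-1) div 2, False) else ((m-2) div 2, True))"

lemma sharp_s: assumes m: "2 \<le> m" shows "XJ m {gen_s} \<inter> XJ_sharp m {gen_s} = {(0,False), zs m}"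
proof (intro set_eqI)
  fix x :: dih
  obtain k b where x: "x = (k,b)" by (cases x)
  have "x \<in> XJ m {gen_s} \<inter> XJ_sharp m {gen_s} \<longleftrightarrow> k < m \<and> \<not> dS m (k,b) \<and>
     dih_mult m (dih_mult m (dih_inv m (k,b)) gen_s) (k,b) \<in> dihS m"
    unfolding XJ_sharp_def x using XJ_mem[OF m sS, of k b] st_neq[OF m] by auto
  also have "\<dots> \<longleftrightarrow> x \<in> {(0,False), zs m}"
    unfolding x using m
    apply (cases "k < m")
     apply (simp add: conj_s)
     apply (simp add: dihS_def gen_s_def gen_t_def dS_def zs_def)
     apply (cases b; simp; presburger)
    apply (auto simp: zs_def split: if_splits; presburger)
    done
  finally show "x \<in> XJ m {gen_s} \<inter> XJ_sharp m {gen_s} \<longleftrightarrow> x \<in> {(0,False), zs m}" .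
qed

lemma sharp_t: assumes m: "2 \<le> m" shows "XJ m {gen_t m} \<inter> XJ_sharp m {gen_t m} = {(0,False), zt m}"
proof (intro set_eqI)
  fix x :: dih
  obtain k b where x: "x = (k,b)" by (cases x)
  have "x \<in> XJ m {gen_t m} \<inter> XJ_sharp m {gen_t m} \<longleftrightarrow> k < m \<and> \<not> dT m (k,b) \<and>
     dih_mult m (dih_mult m (dih_inv m (k,b)) (gen_t m)) (k,b) \<in> dihS m"
    unfolding XJ_sharp_def x using XJ_mem[OF m tS, of k b] st_neq[OF m] by auto
  also have "\<dots> \<longleftrightarrow> x \<in> {(0,False), zt m}"
    unfolding x using m
    apply (cases "k < m")
     apply (simp add: conj_t)
     apply (simp add: dihS_def gen_s_def gen_t_def dT_def zt_def)
     apply (cases b; simp; presburger)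
    apply (auto simp: zt_def split: if_splits; presburger)
    done
  finally show "x \<in> XJ m {gen_t m} \<inter> XJ_sharp m {gen_t m} \<longleftrightarrow> x \<in> {(0,False), zt m}" .
qed

lemma zs_ne: "2 \<le> m \<Longrightarrow> zs m \<noteq> (0,False)" by (auto simp: zs_def)
lemma zt_ne: "2 \<le> m \<Longrightarrow> zt m \<noteq> (0,False)" by (auto simp: zt_def; presburger)


lemma fl_le: "k < m \<Longrightarrow> fl m (k,b) \<le> m"
  by (auto simp: fl_def)

lemma fl_eq: "k < m \<Longrightarrow> fl m (k,b) = m \<longleftrightarrow> (k,b) = w0' m"
  unfolding fl_def w0'_def by (cases b) (simp_all; presburger)+

lemma w0'_carrier: "2 \<le> m \<Longrightarrow> w0' m \<in> dih_carrier m"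
  by (simp add: w0'_def carrier_iff)

lemma w0_eq: assumes m: "2 \<le> m" shows "w0 m = w0' m"
  unfolding w0_def
proof (rule the_equality)
  have fw: "len m (w0' m) = m" using len_eq[OF m w0'_carrier[OF m]] fl_eq[of "m div 2" m "m mod 2 = 1"] m
    by (simp add: w0'_def)
  show "w0' m \<in> dih_carrier m \<and> (\<forall>v\<in>dih_carrier m. len m v \<le> len m (w0' m))"
    using w0'_carrier[OF m] fw len_eq[OF m] fl_le by (auto simp: carrier_iff)
  fix w assume w: "w \<in> dih_carrier m \<and> (\<forall>v\<in>dih_carrier m. len m v \<le> len m w)"
  obtain k b where kb: "w = (k,b)" by (cases w)
  have "len m w = m" using w fw w0'_carrier[OF m] len_eq[OF m] fl_le[of k m b] kb
    by (metis carrier_iff le_antisym)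
  then show "w = w0' m" using fl_eq[of k m b] len_eq[OF m] w kb by (simp add: carrier_iff)
qed

lemma w0'_sq: "2 \<le> m \<Longrightarrow> dih_mult m (w0' m) (w0' m) = dih_one"
  by (simp add: w0'_def mult_eq dih_one_def; presburger)

lemma w0'_one: "2 \<le> m \<Longrightarrow> dih_mult m (w0' m) dih_one = w0' m"
  by (simp add: w0'_def mult_eq dih_one_def)

lemma w0'_ne: "2 \<le> m \<Longrightarrow> w0' m \<noteq> dih_one"
  by (simp add: w0'_def dih_one_def)

lemma pow_w0: "2 \<le> m \<Longrightarrow> dih_pow m (w0' m) k = (if even k then dih_one else w0' m)"
  unfolding dih_pow_def by (induction k) (auto simp: w0'_sq w0'_one)

lemma cyc_w0: assumes m: "2 \<le> m" shows "cyc m (w0 m) = {dih_one, w0' m}"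
proof -
  have "{dih_pow m (w0' m) k | k. True} = {dih_one, w0' m}"
  proof (intro set_eqI iffI)
    fix x assume "x \<in> {dih_pow m (w0' m) k | k. True}"
    then show "x \<in> {dih_one, w0' m}" using pow_w0[OF m] by auto
  next
    fix x assume "x \<in> {dih_one, w0' m}"
    then have "x = dih_pow m (w0' m) 0 \<or> x = dih_pow m (w0' m) 1" using pow_w0[OF m] by auto
    then show "x \<in> {dih_pow m (w0' m) k | k. True}" by blast
  qed
  then show ?thesis unfolding cyc_def w0_eq[OF m] .
qed

lemma XJ_empty: "2 \<le> m \<Longrightarrow> XJ m {} = dih_carrier m"
  by (simp add: XJ_def)
lemma XJs_empty: "2 \<le> m \<Longrightarrow> XJ_sharp m {} = dih_carrier m"
  by (simp add: XJ_sharp_def XJ_def)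

lemma one_sharp: assumes m: "2 \<le> m" and L: "L \<subseteq> dihS m" shows "dih_one \<in> XJ_sharp m L"
proof -
  have "dih_one \<in> XJ m L" using XJ_mem[OF m L, of 0 False] m
    by (simp add: dih_one_def dS_def dT_def)
  moreover have "dih_mult m (dih_mult m (dih_inv m dih_one) j) dih_one = j" if "j \<in> L" for j
  proof -
    have "j \<in> dihS m" using that L by auto
    then show ?thesis using m by (auto simp: dihS_def gen_s_def gen_t_def dih_one_def inv_eq mult_eq)
  qed
  ultimately show ?thesis unfolding XJ_sharp_def using L by auto
qed

lemma XJ_S_sharp: "2 \<le> m \<Longrightarrow> L \<subseteq> dihS m \<Longrightarrow> XJ m (dihS m) \<inter> XJ_sharp m L = {dih_one}"
  using XJ_S one_sharp by (auto simp: dih_one_def)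

lemma carrier_eq: "dih_carrier m = {..<m} \<times> UNIV"
  by (auto simp: dih_carrier_def)

lemma card_carrier: "card (dih_carrier m) = 2 * m"
  by (simp add: carrier_eq card_cartesian_product)

lemma finite_carrier: "finite (dih_carrier m)"
  by (simp add: carrier_eq)

lemma inv_carrier: "2 \<le> m \<Longrightarrow> g \<in> dih_carrier m \<Longrightarrow> dih_inv m g \<in> dih_carrier m \<and> dih_inv m (dih_inv m g) = g"
  by (cases g) (auto simp: inv_eq carrier_iff)

lemma xJ_eval: assumes m: "2 \<le> m" and A: "XJ m J \<subseteq> dih_carrier m"
  shows "xJ m J g = (if g \<in> dih_carrier m \<and> dih_inv m g \<in> XJ m J then 1 else 0)"
proof -
  have fin: "finite (XJ m J)" using A finite_carrier finite_subset by blast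
  have "xJ m J g = (\<Sum>x\<in>XJ m J. if x = dih_inv m g \<and> g \<in> dih_carrier m then 1 else 0)"
    unfolding xJ_def delta_def
    apply (rule sum.cong, simp)
    using A inv_carrier[OF m] by (metis subsetD)
  also have "\<dots> = (if g \<in> dih_carrier m \<and> dih_inv m g \<in> XJ m J then 1 else 0)"
    using fin by (cases "g \<in> dih_carrier m") simp_all
  finally show ?thesis .
qed

lemma XJ_sub: "XJ m J \<subseteq> dih_carrier m" by (auto simp: XJ_def)


lemma sum_pow2: "a \<noteq> b \<Longrightarrow> (\<Sum>L\<in>Pow {a,b}. F L) = F {} + F {a} + F {b} + (F {a,b} :: complex)"
proof -
  assume ab: "a \<noteq> b"
  have P: "Pow {a,b} = {{}, {a}, {b}, {a,b}}" by blast
  show ?thesis unfolding P using ab by (simp add: insert_commute)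
qed

lemma XJ_Un: "XJ m (A \<union> B) = XJ m A \<inter> XJ m B"
  by (auto simp: XJ_def)

lemma Av_delta: "finite A \<Longrightarrow> Av A g = (if g \<in> A then 1 / of_nat (card A) else 0)"
  by (simp add: Av_def delta_def)

lemma inv_w0: "2 \<le> m \<Longrightarrow> dih_inv m (w0' m) = w0' m"
  by (simp add: w0'_def inv_eq; presburger)

theorem lemma5p4:
  fixes m :: nat and e :: "dih set \<Rightarrow> dih \<Rightarrow> complex"
  assumes "m \<ge> 2"
    and "\<forall>K. K \<subseteq> dihS m \<longrightarrow>
           (\<forall>g. xJ m K g = (\<Sum>L\<in>Pow (dihS m). of_nat (mKL m K L) * e L g))"
  shows "\<forall>g. e (dihS m) g = Av (cyc m (w0 m)) g - Av (dih_carrier m) g"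
proof
  fix g
  have m: "2 \<le> m" using assms(1) .
  define s where "s = gen_s"
  define t where "t = gen_t m"
  have st: "s \<noteq> t" using st_neq[OF m] by (simp add: s_def t_def)
  have S: "dihS m = {s,t}" by (simp add: dihS_def s_def t_def)
  have H: "xJ m K g = of_nat (mKL m K {}) * e {} g + of_nat (mKL m K {s}) * e {s} g
      + of_nat (mKL m K {t}) * e {t} g + of_nat (mKL m K {s,t}) * e {s,t} g" if "K \<subseteq> {s,t}" for K
  proof -
    have "xJ m K g = (\<Sum>L\<in>Pow (dihS m). of_nat (mKL m K L) * e L g)"
      by (rule assms(2)[rule_format]) (simp add: S that)
    then have "xJ m K g = (\<Sum>L\<in>Pow {s,t}. of_nat (mKL m K L) * e L g)" by (simp only: S)
    then show ?thesis by (simp only: sum_pow2[OF st])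
  qed
  define A where "A = XJ m {s}"
  define B where "B = XJ m {t}"
  have AB: "A \<inter> B = {dih_one}" unfolding A_def B_def XJ_Un[symmetric]
  proof -
    have "{s} \<union> {t} = {s,t}" by blast
    then show "XJ m ({s} \<union> {t}) = {dih_one}" using XJ_S[OF m] S by (simp add: dih_one_def)
  qed
  have AuB: "A \<union> B = dih_carrier m - {w0' m}" unfolding A_def B_def s_def t_def using XJ_union[OF m] .
  have finA: "finite A" "finite B" unfolding A_def B_def using XJ_sub finite_carrier finite_subset by blast+
  have cardAB: "card A + card B = 2 * m"
  proof -
    have "card A + card B = card (A \<union> B) + card (A \<inter> B)" using card_Un_Int finA by blast
    also have "\<dots> = (2*m - 1) + 1" unfolding AuB AB
      using w0'_carrier[OF m] card_carrier finite_carrier by (simp add: card_Diff_singleton)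
    finally show ?thesis using m by simp
  qed
  have m0: "mKL m {} {} = 2*m" "mKL m {} {s} = 0" "mKL m {} {t} = 0" "mKL m {} {s,t} = 0"
    using XJ_empty[OF m] XJs_empty[OF m] card_carrier by (simp_all add: mKL_def)
  have ms: "mKL m {s} {} = card A" "mKL m {s} {s} = 2" "mKL m {s} {t} = 0" "mKL m {s} {s,t} = 0"
    using st
    by (simp_all add: mKL_def A_def XJs_empty[OF m] Int_absorb2[OF XJ_sub] sharp_s[OF m, folded s_def] zs_ne[OF m, symmetric])
  have mt: "mKL m {t} {} = card B" "mKL m {t} {s} = 0" "mKL m {t} {t} = 2" "mKL m {t} {s,t} = 0"
    using st
    by (simp_all add: mKL_def B_def XJs_empty[OF m] Int_absorb2[OF XJ_sub] sharp_t[OF m, folded t_def] zt_ne[OF m, symmetric])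
  have mS: "mKL m {s,t} L = 1" if "L \<subseteq> {s,t}" for L
    using XJ_S_sharp[OF m, of L] that S by (simp add: mKL_def)
  have one_c: "dih_one \<in> dih_carrier m" using m by (simp add: dih_one_def carrier_iff)
  have E0: "xJ m {} g = of_nat (2*m) * e {} g" using H[of "{}"] m0 by simp
  have Es: "xJ m {s} g = of_nat (card A) * e {} g + 2 * e {s} g" using H[of "{s}"] ms by simp
  have Et: "xJ m {t} g = of_nat (card B) * e {} g + 2 * e {t} g" using H[of "{t}"] mt by simp
  have ES: "xJ m {s,t} g = e {} g + e {s} g + e {t} g + e {s,t} g"
    using H[of "{s,t}"] mS[of "{}"] mS[of "{s}"] mS[of "{t}"] mS[of "{s,t}"] by simp
  have x0: "xJ m {} g = (if g \<in> dih_carrier m then 1 else 0)"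
    using xJ_eval[OF m XJ_sub, of "{}"] XJ_empty[OF m] inv_carrier[OF m] by auto
  have inv1: "g \<in> dih_carrier m \<Longrightarrow> dih_inv m g = dih_one \<longleftrightarrow> g = dih_one"
    using inv_carrier[OF m, of g] by (auto simp: dih_one_def dih_inv_def)
  have invw: "g \<in> dih_carrier m \<Longrightarrow> dih_inv m g = w0' m \<longleftrightarrow> g = w0' m"
    using inv_carrier[OF m, of g] inv_w0[OF m] by metis
  have xS: "xJ m {s,t} g = (if g = dih_one then 1 else 0)"
  proof -
    have "xJ m (dihS m) g = (if g \<in> dih_carrier m \<and> dih_inv m g \<in> XJ m (dihS m) then 1 else 0)"
      by (rule xJ_eval[OF m XJ_sub])
    also have "\<dots> = (if g \<in> dih_carrier m \<and> dih_inv m g = dih_one then 1 else 0)"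
      unfolding XJ_S[OF m] by (simp add: dih_one_def)
    also have "\<dots> = (if g = dih_one then 1 else 0)"
      using inv1 m by (auto simp: dih_one_def carrier_iff)
    finally show ?thesis unfolding S .
  qed
  have xst: "xJ m {s} g + xJ m {t} g = (if g \<in> dih_carrier m \<and> g \<noteq> w0' m then 1 else 0) + (if g = dih_one then 1 else 0)"
  proof -
    have "xJ m {s} g + xJ m {t} g = (if g \<in> dih_carrier m \<and> dih_inv m g \<in> A then 1 else 0)
        + (if g \<in> dih_carrier m \<and> dih_inv m g \<in> B then 1 else 0)"
      using xJ_eval[OF m XJ_sub, of "{s}"] xJ_eval[OF m XJ_sub, of "{t}"] by (simp add: A_def B_def)
    also have "\<dots> = (if g \<in> dih_carrier m \<and> dih_inv m g \<in> A \<union> B then 1 else 0)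
        + (if g \<in> dih_carrier m \<and> dih_inv m g \<in> A \<inter> B then 1 else 0)"
      by (cases "g \<in> dih_carrier m"; cases "dih_inv m g \<in> A"; cases "dih_inv m g \<in> B"; simp)
    also have "\<dots> = (if g \<in> dih_carrier m \<and> g \<noteq> w0' m then 1 else 0) + (if g = dih_one then 1 else 0)"
      unfolding AuB AB using inv1 invw inv_carrier[OF m, of g] one_c
      by (cases "g \<in> dih_carrier m") (simp_all, blast)
    finally show ?thesis .
  qed
  have mc: "(of_nat m :: complex) \<noteq> 0" using m by simp
  have e0: "e {} g = (if g \<in> dih_carrier m then 1 else 0) / (2 * of_nat m)"
    using E0 x0 mc by (simp add: field_simps)
  have est: "e {s} g + e {t} g = (xJ m {s} g + xJ m {t} g) / 2 - of_nat m * e {} g"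
  proof -
    have "xJ m {s} g + xJ m {t} g = of_nat (card A + card B) * e {} g + 2 * (e {s} g + e {t} g)"
      using Es Et by (simp add: algebra_simps)
    then show ?thesis unfolding cardAB by (simp add: field_simps)
  qed
  have eS: "e {s,t} g = xJ m {s,t} g - e {} g - (e {s} g + e {t} g)"
    using ES by (simp add: algebra_simps)
  have rhs: "Av (cyc m (w0 m)) g - Av (dih_carrier m) g =
      (if g \<in> {dih_one, w0' m} then 1/2 else 0) - (if g \<in> dih_carrier m then 1 / (2 * of_nat m) else 0)"
    using cyc_w0[OF m] w0'_ne[OF m] Av_delta card_carrier finite_carrier by simp
  show "e (dihS m) g = Av (cyc m (w0 m)) g - Av (dih_carrier m) g"
    unfolding rhs S eS est xst xS e0
    using one_c w0'_carrier[OF m] w0'_ne[OF m] mc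
    by (cases "g \<in> dih_carrier m"; cases "g = dih_one"; cases "g = w0' m"; simp add: field_simps)
qed

end
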